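(* Let $A\in\mathbb{R}^{m\times n}$ have no zero row, with rows $a_1^T,\dots,a_m^T$, let $\mu_1,\dots,\mu_m\in\mathbb{R}$ be arbitrary, ${\bf u}=(\mu_1,\dots,\mu_m)$, and $h_{k,l}=a_k^Ta_l/\|a_l\|_2^2$. For $1\le i<j\le m$ let $$d_{i,j}({\bf u}_i)=\sum_{v=2}^{j-i+1}(-1)^{v-1}\sum_{i=t_1<t_2<\dots<t_v=j}\ \prod_{s=1}^{v-1}\mu_{t_{s+1}}\prod_{s=1}^{v-1}h_{t_s,t_{s+1}},$$ and let $\Omega({\bf u})\in\mathbb{R}^{m\times m}$ be the unit upper triangular matrix with $(i,j)$ entry $d_{i,j}({\bf u}_i)$ for $j>i$. For $j\neq i$ and $c\in\mathbb{R}$ let $E(j,i(c))=I_m+c\,e_je_i^T$ (the identity with entry $c$ at position $(j,i)$). Define $H_1(\mu_1)=I_m$ and $H_i(\mu_i)=\prod_{j=1}^{i-1}E\big(j,i(-\mu_ih_{j,i})\big)$ for $1<i\le m$. Then $$\Omega({\bf u})=H_1(\mu_1)H_2(\mu_2)\cdots H_m(\mu_m).$$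
   Context: $e_k$ denotes the $k$-th standard basis vector of $\mathbb{R}^m$ and $I_m$ the $m\times m$ identity. *)

theory Defs
  imports "Jordan_Normal_Form.Matrix"
begin

text \<open>Indices are 0-based: paper index k (1..m) corresponds to k-1 here.
  Rows of A are row A k, k < dim_row A.\<close>

definition hcoef :: "real mat \<Rightarrow> nat \<Rightarrow> nat \<Rightarrow> real" where
  "hcoef A k l = (row A k \<bullet> row A l) / (row A l \<bullet> row A l)"

definition chains :: "nat \<Rightarrow> nat \<Rightarrow> nat \<Rightarrow> nat list set" where
  "chains i j v = {ts. length ts = v \<and> sorted_wrt (<) ts \<and> ts ! 0 = i \<and> ts ! (v - 1) = j}"

definition dcoef :: "real mat \<Rightarrow> (nat \<Rightarrow> real) \<Rightarrow> nat \<Rightarrow> nat \<Rightarrow> real" where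
  "dcoef A u i j = (\<Sum>v = 2..j - i + 1. (-1) ^ (v - 1) *
     (\<Sum>ts \<in> chains i j v.
        (\<Prod>s < v - 1. u (ts ! (s + 1))) * (\<Prod>s < v - 1. hcoef A (ts ! s) (ts ! (s + 1)))))"

definition Omega :: "nat \<Rightarrow> real mat \<Rightarrow> (nat \<Rightarrow> real) \<Rightarrow> real mat" where
  "Omega m A u = mat m m (\<lambda>(i, j). if i = j then 1 else if i < j then dcoef A u i j else 0)"

definition Elem :: "nat \<Rightarrow> nat \<Rightarrow> nat \<Rightarrow> real \<Rightarrow> real mat" where
  "Elem m j i c = 1\<^sub>m m + c \<cdot>\<^sub>m mat m m (\<lambda>(r, s). unit_vec m j $ r * unit_vec m i $ s)"

definition mat_prod_list :: "nat \<Rightarrow> real mat list \<Rightarrow> real mat" where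
  "mat_prod_list m Ms = foldr (*) Ms (1\<^sub>m m)"

definition Hmat :: "nat \<Rightarrow> real mat \<Rightarrow> (nat \<Rightarrow> real) \<Rightarrow> nat \<Rightarrow> real mat" where
  "Hmat m A u i = (if i = 0 then 1\<^sub>m m
     else mat_prod_list m (map (\<lambda>j. Elem m j i (- u i * hcoef A j i)) [0..<i]))"

end

theory Submission imports Defs begin

lemma sorted_nth_ge0: "sorted_wrt (<) (ts::nat list) \<Longrightarrow> n < length ts \<Longrightarrow> ts!0 + n \<le> ts!n"
proof (induction n)
  case 0 then show ?case by simp
next
  case (Suc n)
  have "ts!n < ts!(Suc n)" using Suc.prems by (simp add: sorted_wrt_nth_less)
  then show ?case using Suc by simp
qed

lemma sorted_nth_mono:
  fixes ts :: "nat list"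
  assumes "sorted_wrt (<) ts" "n \<le> p" "p < length ts" shows "ts!n \<le> ts!p"
proof (cases "n = p")
  case False
  then have "n < p" using assms by simp
  then show ?thesis using sorted_wrt_nth_less[OF assms(1) \<open>n < p\<close> assms(3)] by simp
qed simp

lemma chains_finite: "finite (chains i j v)"
proof (cases v)
  case 0
  then have "chains i j v \<subseteq> {[]}" by (auto simp: chains_def)
  then show ?thesis by (rule finite_subset) simp
next
  case (Suc w)
  have "chains i j v \<subseteq> {xs. set xs \<subseteq> {..j} \<and> length xs = v}"
  proof
    fix ts assume "ts \<in> chains i j v"
    then have ts: "length ts = v" "sorted_wrt (<) ts" "ts!(v-1) = j" by (auto simp: chains_def)
    have "x \<le> j" if "x \<in> set ts" for x
    proof -
      have "\<exists>n<length ts. ts!n = x" using that by (simp add: in_set_conv_nth)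
      then obtain n where "n < v" "x = ts!n" using ts by blast
      then show ?thesis using ts sorted_nth_mono[of ts n "v-1"] Suc by auto
    qed
    then show "ts \<in> {xs. set xs \<subseteq> {..j} \<and> length xs = v}" using ts by auto
  qed
  then show ?thesis by (rule finite_subset) (simp add: finite_lists_length_eq)
qed

lemma chains_empty: "v > j - i + 1 \<Longrightarrow> chains i j v = {}"
proof (rule ccontr)
  assume "v > j - i + 1" "chains i j v \<noteq> {}"
  then obtain ts where ts: "length ts = v" "sorted_wrt (<) ts" "ts!0 = i" "ts!(v-1) = j"
    by (auto simp: chains_def)
  have "i + (v-1) \<le> j" using sorted_nth_ge0[OF ts(2), of "v-1"] ts \<open>v > j - i + 1\<close> by auto
  then show False using \<open>v > j - i + 1\<close> by linarith
qed

lemma chains_1: "chains i l (Suc 0) = (if i = l then {[i]} else {})"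
  by (auto simp: chains_def length_Suc_conv)

lemma chains_Suc:
  assumes "v \<ge> 1"
  shows "chains i k (Suc v) = (\<lambda>(l,ts). ts @ [k]) ` (SIGMA l:{i..<k}. chains i l v)"
proof
  show "chains i k (Suc v) \<subseteq> (\<lambda>(l,ts). ts @ [k]) ` (SIGMA l:{i..<k}. chains i l v)"
  proof
    fix xs assume "xs \<in> chains i k (Suc v)"
    then have xs: "length xs = Suc v" "sorted_wrt (<) xs" "xs!0 = i" "xs!v = k" by (auto simp: chains_def)
    define ts where "ts = butlast xs"
    have xe: "xs = ts @ [k]" using xs unfolding ts_def
      by (metis append_butlast_last_id diff_Suc_1 last_conv_nth list.size(3) nat.simps(3))
    have lt: "length ts = v" using xe xs by simp
    have st: "sorted_wrt (<) ts" using xs(2) xe by (simp add: sorted_wrt_append)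
    have t0: "ts!0 = i" using xs(3) xe assms lt by (simp add: nth_append)
    have "xs!(v-1) < xs!v" using sorted_wrt_nth_less[OF xs(2), of "v-1" v] xs assms by simp
    then have lk: "ts!(v-1) < k" using xe xs lt assms by (simp add: nth_append)
    have il: "i \<le> ts!(v-1)" using sorted_nth_mono[OF st, of 0 "v-1"] t0 lt assms by simp
    have "(ts!(v-1), ts) \<in> (SIGMA l:{i..<k}. chains i l v)"
      using lk il st t0 lt by (simp add: chains_def)
    then show "xs \<in> (\<lambda>(l,ts). ts @ [k]) ` (SIGMA l:{i..<k}. chains i l v)"
      using xe by force
  qed
next
  show "(\<lambda>(l,ts). ts @ [k]) ` (SIGMA l:{i..<k}. chains i l v) \<subseteq> chains i k (Suc v)"
  proof clarify
    fix l ts assume "l \<in> {i..<k}" "ts \<in> chains i l v"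
    then have ts: "length ts = v" "sorted_wrt (<) ts" "ts!0 = i" "ts!(v-1) = l" "l < k"
      by (auto simp: chains_def)
    have "x < k" if "x \<in> set ts" for x
    proof -
      have "\<exists>n<length ts. ts!n = x" using that by (simp add: in_set_conv_nth)
      then obtain n where "n < v" "x = ts!n" using ts by blast
      moreover have "n \<le> v - 1" using \<open>n < v\<close> by simp
      ultimately have "ts!n \<le> ts!(v-1)" using sorted_nth_mono[of ts n "v-1"] ts by simp
      then show ?thesis using ts \<open>x = ts!n\<close> by simp
    qed
    then show "ts @ [k] \<in> chains i k (Suc v)"
      using ts assms by (auto simp: chains_def sorted_wrt_append nth_append)
  qed
qed

lemma chains_inj: "inj_on (\<lambda>(l,ts). ts @ [k]) (SIGMA l:{i..<k}. chains i l v)"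
  by (auto simp: inj_on_def chains_def)


definition Wt :: "(nat \<Rightarrow> nat \<Rightarrow> real) \<Rightarrow> nat list \<Rightarrow> real" where
  "Wt f ts = (\<Prod>s<length ts - 1. f (ts!s) (ts!(s+1)))"

definition Sc :: "(nat \<Rightarrow> nat \<Rightarrow> real) \<Rightarrow> nat \<Rightarrow> nat \<Rightarrow> nat \<Rightarrow> real" where
  "Sc f v i j = (\<Sum>ts\<in>chains i j v. Wt f ts)"

definition Dc :: "(nat \<Rightarrow> nat \<Rightarrow> real) \<Rightarrow> nat \<Rightarrow> nat \<Rightarrow> real" where
  "Dc f i j = (\<Sum>v = 2..j - i + 1. Sc f v i j)"

lemma Wt_snoc:
  assumes "ts \<noteq> []" shows "Wt f (ts @ [k]) = Wt f ts * f (last ts) k"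
proof -
  obtain n where n: "length ts = Suc n" using assms by (cases ts) auto
  have "Wt f (ts @ [k]) = (\<Prod>s<Suc n. f ((ts@[k])!s) ((ts@[k])!(s+1)))"
    unfolding Wt_def using n by simp
  also have "\<dots> = (\<Prod>s<n. f ((ts@[k])!s) ((ts@[k])!(s+1))) * f (ts!n) k"
    using n by (simp add: nth_append)
  also have "(\<Prod>s<n. f ((ts@[k])!s) ((ts@[k])!(s+1))) = Wt f ts"
    unfolding Wt_def using n by (intro prod.cong) (auto simp: nth_append)
  also have "ts!n = last ts" using n assms by (simp add: last_conv_nth)
  finally show ?thesis .
qed

lemma Sc_Suc:
  assumes "v \<ge> 1"
  shows "Sc f (Suc v) i k = (\<Sum>l\<in>{i..<k}. Sc f v i l * f l k)"
proof -
  have "Sc f (Suc v) i k = sum (Wt f) ((\<lambda>(l,ts). ts @ [k]) ` (SIGMA l:{i..<k}. chains i l v))"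
    unfolding Sc_def chains_Suc[OF assms] ..
  also have "\<dots> = (\<Sum>(l,ts)\<in>(SIGMA l:{i..<k}. chains i l v). Wt f (ts @ [k]))"
    by (subst sum.reindex[OF chains_inj]) (simp add: case_prod_unfold)
  also have "\<dots> = (\<Sum>l\<in>{i..<k}. \<Sum>ts\<in>chains i l v. Wt f (ts @ [k]))"
    by (rule sum.Sigma[symmetric]) (auto simp: chains_finite)
  also have "\<dots> = (\<Sum>l\<in>{i..<k}. \<Sum>ts\<in>chains i l v. Wt f ts * f l k)"
  proof (intro sum.cong refl)
    fix l ts assume "ts \<in> chains i l v"
    then have ts: "length ts = v" "ts!(v-1) = l" by (auto simp: chains_def)
    then have ne: "ts \<noteq> []" using assms by auto
    then have "last ts = l" using ts by (simp add: last_conv_nth)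
    note ne this
    then show "Wt f (ts @ [k]) = Wt f ts * f l k" by (simp add: Wt_snoc)
  qed
  also have "\<dots> = (\<Sum>l\<in>{i..<k}. Sc f v i l * f l k)"
    unfolding Sc_def by (simp add: sum_distrib_right)
  finally show ?thesis .
qed

lemma Sc_1: "Sc f 1 i l = (if i = l then 1 else 0)"
  by (simp add: Sc_def chains_1 Wt_def)

lemma Sc_big: "v > l - i + 1 \<Longrightarrow> Sc f v i l = 0"
  by (simp add: Sc_def chains_empty)

lemma Dc_rec:
  assumes "i < k"
  shows "Dc f i k = f i k + (\<Sum>l\<in>{Suc i..<k}. Dc f i l * f l k)"
proof -
  have "Dc f i k = (\<Sum>v = Suc 1..Suc (k - i). Sc f v i k)"
    unfolding Dc_def by (simp only: Suc_1 Suc_eq_plus1 one_add_one)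
  also have "\<dots> = (\<Sum>v = 1..k - i. Sc f (Suc v) i k)"
    by (rule sum.shift_bounds_cl_Suc_ivl)
  also have "\<dots> = (\<Sum>v = 1..k - i. \<Sum>l\<in>{i..<k}. Sc f v i l * f l k)"
    by (intro sum.cong refl) (simp add: Sc_Suc)
  also have "\<dots> = (\<Sum>l\<in>{i..<k}. (\<Sum>v = 1..k - i. Sc f v i l) * f l k)"
    by (subst sum.swap) (simp add: sum_distrib_right)
  also have "\<dots> = (\<Sum>l\<in>{i..<k}. ((if i = l then 1 else 0) + Dc f i l) * f l k)"
  proof (intro sum.cong refl)
    fix l assume l: "l \<in> {i..<k}"
    have "(\<Sum>v = 1..k - i. Sc f v i l) = (\<Sum>v = 1..Suc (l - i). Sc f v i l)"
      by (rule sum.mono_neutral_right) (use l in \<open>auto simp: Sc_big\<close>)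
    also have "\<dots> = Sc f 1 i l + (\<Sum>v = Suc 1..Suc (l - i). Sc f v i l)"
      by (rule sum.atLeast_Suc_atMost) simp
    also have "(\<Sum>v = Suc 1..Suc (l - i). Sc f v i l) = Dc f i l"
      unfolding Dc_def by (simp only: Suc_1 Suc_eq_plus1 one_add_one)
    also have "Sc f 1 i l = (if i = l then 1 else 0)" by (rule Sc_1)
    finally show "(\<Sum>v = 1..k - i. Sc f v i l) * f l k = ((if i = l then 1 else 0) + Dc f i l) * f l k"
      by simp
  qed
  also have "\<dots> = ((1 + Dc f i i) * f i k) + (\<Sum>l\<in>{Suc i..<k}. ((if i = l then 1 else 0) + Dc f i l) * f l k)"
    using assms by (subst sum.atLeast_Suc_lessThan) auto
  also have "\<dots> = f i k + (\<Sum>l\<in>{Suc i..<k}. Dc f i l * f l k)"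
    by (simp add: Dc_def)
  finally show ?thesis .
qed

lemma prod_neg: "(\<Prod>s<n. - (g s :: real)) = (-1)^n * (\<Prod>s<n. g s)"
  by (induction n) auto

lemma dcoef_Dc: "dcoef A u i j = Dc (\<lambda>a b. - u b * hcoef A a b) i j"
  unfolding dcoef_def Dc_def Sc_def
proof (intro sum.cong refl)
  fix v
  show "(-1) ^ (v - 1) * (\<Sum>ts\<in>chains i j v.
        (\<Prod>s<v - 1. u (ts ! (s + 1))) * (\<Prod>s<v - 1. hcoef A (ts ! s) (ts ! (s + 1)))) =
    (\<Sum>ts\<in>chains i j v. Wt (\<lambda>a b. - u b * hcoef A a b) ts)"
    unfolding sum_distrib_left
  proof (intro sum.cong refl)
    fix ts assume "ts \<in> chains i j v"
    then have "length ts = v" by (simp add: chains_def)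
    then show "(-1) ^ (v - 1) * ((\<Prod>s<v - 1. u (ts ! (s + 1))) * (\<Prod>s<v - 1. hcoef A (ts ! s) (ts ! (s + 1)))) =
      Wt (\<lambda>a b. - u b * hcoef A a b) ts"
      by (simp add: Wt_def prod.distrib prod_neg)
  qed
qed


lemma mult_mat_entry:
  assumes "i < m" "j < m"
  shows "(mat m m f * mat m m g) $$ (i,j) = (\<Sum>l<m. f (i,l) * g (l,j))"
  using assms by (simp add: scalar_prod_def lessThan_atLeast0)

lemma sum_if_less: "(k::nat) \<le> m \<Longrightarrow> (\<Sum>l<m. if l < k then g l else 0) = (\<Sum>l<k. (g l :: real))"
proof -
  assume "k \<le> m"
  then have "{..<m} \<inter> {l. l < k} = {..<k}" by auto
  then show ?thesis by (simp add: sum.If_cases)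
qed

lemma foldr_carrier: "\<forall>x\<in>set (xs :: real mat list). x \<in> carrier_mat m m \<Longrightarrow> foldr (*) xs (1\<^sub>m m) \<in> carrier_mat m m"
  by (induction xs) auto

lemma foldr_snoc:
  fixes xs :: "real mat list"
  assumes "\<forall>y\<in>set xs. y \<in> carrier_mat m m" "x \<in> carrier_mat m m"
  shows "foldr (*) (xs @ [x]) (1\<^sub>m m) = foldr (*) xs (1\<^sub>m m) * x"
  using assms
proof (induction xs)
  case Nil
  then have "x \<in> carrier_mat m m" by simp
  then show ?case using right_mult_one_mat[of x m m] left_mult_one_mat[of x m m] by simp
next
  case (Cons a xs)
  then have "foldr (*) xs (1\<^sub>m m) \<in> carrier_mat m m" by (simp add: foldr_carrier)
  then show ?case using Cons by (simp add: assoc_mult_mat[of a m m _ m x m])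
qed

lemma Elem_carrier: "Elem m j i c \<in> carrier_mat m m"
  by (simp add: Elem_def)

definition Hc :: "nat \<Rightarrow> (nat \<Rightarrow> nat \<Rightarrow> real) \<Rightarrow> nat \<Rightarrow> real mat" where
  "Hc m f k = mat m m (\<lambda>(r,s). if r = s then 1 else if s = k \<and> r < k then f r k else 0)"

lemma Elem_mat: "Elem m j i c = mat m m (\<lambda>(r,s). (if r = s then 1 else 0) + (if r = j \<and> s = i then c else 0))"
  by (rule eq_matI) (auto simp: Elem_def unit_vec_def)

lemma Hc_prefix:
  assumes "p \<le> k"
  shows "mat_prod_list m (map (\<lambda>j. Elem m j k (f j k)) [0..<p]) =
    mat m m (\<lambda>(r,s). if r = s then 1 else if s = k \<and> r < p then f r k else 0)"
  using assms
proof (induction p)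
  case 0
  show ?case by (auto simp: mat_prod_list_def intro!: eq_matI)
next
  case (Suc p)
  have car: "\<forall>y\<in>set (map (\<lambda>j. Elem m j k (f j k)) [0..<p]). y \<in> carrier_mat m m"
    by (auto simp: Elem_carrier)
  have mapeq: "map (\<lambda>j. Elem m j k (f j k)) [0..<Suc p] = map (\<lambda>j. Elem m j k (f j k)) [0..<p] @ [Elem m p k (f p k)]"
    by simp
  have "mat_prod_list m (map (\<lambda>j. Elem m j k (f j k)) [0..<Suc p]) =
     mat_prod_list m (map (\<lambda>j. Elem m j k (f j k)) [0..<p]) * Elem m p k (f p k)"
    unfolding mat_prod_list_def mapeq by (rule foldr_snoc[OF car Elem_carrier])
  also have "\<dots> = mat m m (\<lambda>(r,s). if r = s then 1 else if s = k \<and> r < p then f r k else 0) *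
      mat m m (\<lambda>(r,s). (if r = s then 1 else 0) + (if r = p \<and> s = k then f p k else 0))"
    using Suc by (simp add: Elem_mat)
  also have "\<dots> = mat m m (\<lambda>(r,s). if r = s then 1 else if s = k \<and> r < Suc p then f r k else 0)"
  proof (rule eq_matI)
    fix i j assume ij: "i < dim_row (mat m m (\<lambda>(r,s). if r = s then 1 else if s = k \<and> r < Suc p then f r k else (0::real)))"
      "j < dim_col (mat m m (\<lambda>(r,s). if r = s then 1 else if s = k \<and> r < Suc p then f r k else (0::real)))"
    then have ij: "i < m" "j < m" by auto
    have "(mat m m (\<lambda>(r,s). if r = s then 1 else if s = k \<and> r < p then f r k else 0) *
      mat m m (\<lambda>(r,s). (if r = s then 1 else 0) + (if r = p \<and> s = k then f p k else 0))) $$ (i,j) =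
      (\<Sum>l<m. (if i = l then 1 else if l = k \<and> i < p then f i k else 0) *
            ((if l = j then 1 else 0) + (if l = p \<and> j = k then f p k else 0)))"
      unfolding mult_mat_entry[OF ij] by simp
    also have "(\<Sum>l<m. (if i = l then 1 else if l = k \<and> i < p then f i k else 0) *
            ((if l = j then 1 else 0) + (if l = p \<and> j = k then f p k else 0))) =
          (\<Sum>l<m. (if l = j then (if i = j then 1 else if j = k \<and> i < p then f i k else 0) else 0)
              + (if l = p then (if i = p \<and> j = k then f p k else 0) else 0))"
      using Suc.prems by (intro sum.cong refl) auto
    also have "\<dots> = (if i = j then 1 else if j = k \<and> i < Suc p then f i k else 0)"
      using ij Suc.prems by (auto simp: sum.distrib)
    also have "\<dots> = mat m m (\<lambda>(r,s). if r = s then 1 else if s = k \<and> r < Suc p then f r k else 0) $$ (i,j)"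
      using ij by simp
    finally show "(mat m m (\<lambda>(r,s). if r = s then 1 else if s = k \<and> r < p then f r k else 0) *
      mat m m (\<lambda>(r,s). (if r = s then 1 else 0) + (if r = p \<and> s = k then f p k else 0))) $$ (i,j) =
      mat m m (\<lambda>(r,s). if r = s then 1 else if s = k \<and> r < Suc p then f r k else 0) $$ (i,j)" .
  qed auto
  finally show ?case .
qed

lemma Hmat_Hc: "Hmat m A u k = Hc m (\<lambda>a b. - u b * hcoef A a b) k"
proof (cases "k = 0")
  case True
  then show ?thesis by (auto simp: Hmat_def Hc_def intro!: eq_matI)
next
  case False
  then show ?thesis unfolding Hmat_def Hc_def using Hc_prefix[of k k m "\<lambda>a b. - u b * hcoef A a b"]
    by simp
qed


lemma prefix_prod:
  fixes F :: "nat \<Rightarrow> nat \<Rightarrow> real"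
  assumes HF: "\<And>k. Hmat m A u k = Hc m F k"
  shows "k \<le> m \<Longrightarrow> mat_prod_list m (map (Hmat m A u) [0..<k]) =
    mat m m (\<lambda>(i,j). if i = j then 1 else if i < j \<and> j < k then Dc F i j else 0)"
proof (induction k)
  case 0
  show ?case by (auto simp: mat_prod_list_def intro!: eq_matI)
next
  case (Suc k)
  then have km: "k < m" by simp
  define Q where "Q = (\<lambda>(i,j). if i = j then 1 else if i < j \<and> j < k then Dc F i j else (0::real))"
  define H where "H = (\<lambda>(r,s). if r = s then 1 else if s = k \<and> r < k then F r k else (0::real))"
  have car: "\<forall>y\<in>set (map (Hmat m A u) [0..<k]). y \<in> carrier_mat m m"
    by (auto simp: HF Hc_def)
  have mapeq: "map (Hmat m A u) [0..<Suc k] = map (Hmat m A u) [0..<k] @ [Hmat m A u k]"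
    by simp
  have "mat_prod_list m (map (Hmat m A u) [0..<Suc k]) = mat_prod_list m (map (Hmat m A u) [0..<k]) * Hmat m A u k"
    unfolding mat_prod_list_def mapeq by (rule foldr_snoc[OF car]) (simp add: HF Hc_def)
  also have "\<dots> = mat m m Q * mat m m H"
  proof -
    have "mat_prod_list m (map (Hmat m A u) [0..<k]) = mat m m Q"
      using Suc.IH km unfolding Q_def by simp
    moreover have "Hmat m A u k = mat m m H" by (simp add: HF Hc_def H_def)
    ultimately show ?thesis by simp
  qed
  also have "\<dots> = mat m m (\<lambda>(i,j). if i = j then 1 else if i < j \<and> j < Suc k then Dc F i j else 0)"
  proof (rule eq_matI)
    fix i j assume "i < dim_row (mat m m (\<lambda>(i,j). if i = j then 1 else if i < j \<and> j < Suc k then Dc F i j else (0::real)))"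
      "j < dim_col (mat m m (\<lambda>(i,j). if i = j then 1 else if i < j \<and> j < Suc k then Dc F i j else (0::real)))"
    then have ij: "i < m" "j < m" by auto
    have "(mat m m Q * mat m m H) $$ (i,j) = (\<Sum>l<m. Q (i,l) * H (l,j))"
      by (rule mult_mat_entry[OF ij])
    also have "\<dots> = (if i = j then 1 else if i < j \<and> j < Suc k then Dc F i j else 0)"
    proof (cases "j = k")
      case False
      have "(\<Sum>l<m. Q (i,l) * H (l,j)) = (\<Sum>l<m. if l = j then Q (i,j) else 0)"
        using False by (intro sum.cong refl) (auto simp: H_def)
      also have "\<dots> = Q (i,j)" using ij by simp
      finally show ?thesis using False by (simp add: Q_def)
    next
      case True
      have "(\<Sum>l<m. Q (i,l) * H (l,j)) = (\<Sum>l<m. (if l = k then Q (i,k) else 0) + (if l < k then Q (i,l) * F l k else 0))"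
        using True by (intro sum.cong refl) (auto simp: H_def)
      also have "\<dots> = Q (i,k) + (\<Sum>l<k. Q (i,l) * F l k)"
        using km by (simp add: sum.distrib sum_if_less)
      also have "\<dots> = (if i = j then 1 else if i < j \<and> j < Suc k then Dc F i j else 0)"
      proof (cases "i < k")
        case True
        have "(\<Sum>l<k. Q (i,l) * F l k) = (\<Sum>l\<in>{i..<k}. Q (i,l) * F l k)"
          by (rule sum.mono_neutral_right) (auto simp: Q_def)
        also have "\<dots> = Q (i,i) * F i k + (\<Sum>l\<in>{Suc i..<k}. Q (i,l) * F l k)"
          using True by (rule sum.atLeast_Suc_lessThan)
        also have "(\<Sum>l\<in>{Suc i..<k}. Q (i,l) * F l k) = (\<Sum>l\<in>{Suc i..<k}. Dc F i l * F l k)"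
          by (intro sum.cong refl) (auto simp: Q_def)
        also have "Q (i,i) * F i k + (\<Sum>l\<in>{Suc i..<k}. Dc F i l * F l k) = Dc F i k"
          using Dc_rec[OF True, of F] by (simp add: Q_def)
        finally show ?thesis using True \<open>j = k\<close> by (simp add: Q_def)
      next
        case False
        have "(\<Sum>l<k. Q (i,l) * F l k) = 0"
          using False by (intro sum.neutral) (auto simp: Q_def)
        then show ?thesis using False \<open>j = k\<close> by (simp add: Q_def)
      qed
      finally show ?thesis .
    qed
    also have "\<dots> = mat m m (\<lambda>(i,j). if i = j then 1 else if i < j \<and> j < Suc k then Dc F i j else 0) $$ (i,j)"
      using ij by simp
    finally show "(mat m m Q * mat m m H) $$ (i,j) = mat m m (\<lambda>(i,j). if i = j then 1 else if i < j \<and> j < Suc k then Dc F i j else 0) $$ (i,j)" .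
  qed auto
  finally show ?case .
qed

theorem theorem3p9:
  fixes A :: "real mat" and u :: "nat \<Rightarrow> real" and m n :: nat
  assumes "A \<in> carrier_mat m n"
    and "\<forall>k < m. row A k \<noteq> 0\<^sub>v n"
  shows "Omega m A u = mat_prod_list m (map (Hmat m A u) [0..<m])"
proof -
  have "mat_prod_list m (map (Hmat m A u) [0..<m]) =
    mat m m (\<lambda>(i,j). if i = j then 1 else if i < j \<and> j < m then Dc (\<lambda>a b. - u b * hcoef A a b) i j else 0)"
    by (rule prefix_prod[OF Hmat_Hc]) simp
  also have "\<dots> = Omega m A u"
    by (rule eq_matI) (auto simp: Omega_def dcoef_Dc)
  finally show ?thesis by simp
qed

end
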